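(* Let $p,q,r$ be pairwise distinct primes with $p<q$ and $p<r$. Let $q',r'\in\{1,\dots,p-1\}$ be the inverses of $q,r$ modulo $p$, let $p'_q\in\{1,\dots,q-1\}$ be the inverse of $p$ modulo $q$ and $p'_r\in\{1,\dots,r-1\}$ the inverse of $p$ modulo $r$. Then for every integer $k$, $$F_k-F_{k-q}=\begin{cases}-1,& \text{if } a_k<r' \text{ and } c_k<p'_r,\\ 1,& \text{if } a_k\ge r' \text{ and } c_k\ge p'_r,\\ 0,&\text{otherwise},\end{cases}$$ and $$F_k-F_{k-r}=\begin{cases}-1,& \text{if } a_k<q' \text{ and } b_k<p'_q,\\ 1,& \text{if } a_k\ge q' \text{ and } b_k\ge p'_q,\\ 0,&\text{otherwise}.\end{cases}$$
   Context: For each integer $k$, let $a_k,b_k,c_k$ be the unique integers with $0\le a_k<p$, $0\le b_k<q$, $0\le c_k<r$ and $k\equiv a_kqr+b_krp+c_kpq \pmod{pqr}$, and define $F_k=\frac{a_k}{p}+\frac{b_k}{q}+\frac{c_k}{r}-\frac{k}{pqr}$. *)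

theory Defs
  imports "HOL-Number_Theory.Number_Theory"
begin

definition abc :: "int \<Rightarrow> int \<Rightarrow> int \<Rightarrow> int \<Rightarrow> int \<times> int \<times> int" where
  "abc p q r k = (THE t. case t of (a, b, c) \<Rightarrow>
      0 \<le> a \<and> a < p \<and> 0 \<le> b \<and> b < q \<and> 0 \<le> c \<and> c < r \<and>
      [k = a*q*r + b*r*p + c*p*q] (mod p*q*r))"

definition ak :: "int \<Rightarrow> int \<Rightarrow> int \<Rightarrow> int \<Rightarrow> int" where
  "ak p q r k = fst (abc p q r k)"

definition bk :: "int \<Rightarrow> int \<Rightarrow> int \<Rightarrow> int \<Rightarrow> int" where
  "bk p q r k = fst (snd (abc p q r k))"

definition ck :: "int \<Rightarrow> int \<Rightarrow> int \<Rightarrow> int \<Rightarrow> int" where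
  "ck p q r k = snd (snd (abc p q r k))"

definition F :: "int \<Rightarrow> int \<Rightarrow> int \<Rightarrow> int \<Rightarrow> real" where
  "F p q r k = real_of_int (ak p q r k) / real_of_int p + real_of_int (bk p q r k) / real_of_int q
     + real_of_int (ck p q r k) / real_of_int r - real_of_int k / real_of_int (p*q*r)"

end

theory Submission
  imports Defs
begin

definition good :: "int \<Rightarrow> int \<Rightarrow> int \<Rightarrow> int \<Rightarrow> int \<times> int \<times> int \<Rightarrow> bool" where
  "good p q r k t = (case t of (a, b, c) \<Rightarrow>
      0 \<le> a \<and> a < p \<and> 0 \<le> b \<and> b < q \<and> 0 \<le> c \<and> c < r \<and>
      [k = a*q*r + b*r*p + c*p*q] (mod p*q*r))"

lemma dvd3:
  fixes p q r x :: int
  assumes "coprime p q" "coprime p r" "coprime q r" "p dvd x" "q dvd x" "r dvd x"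
  shows "p*q*r dvd x"
proof -
  have "p*q dvd x" using assms divides_mult by blast
  moreover have "coprime (p*q) r" using assms by simp
  ultimately show ?thesis using assms divides_mult by blast
qed

lemma small0:
  fixes p x y :: int
  assumes "p dvd x - y" "0 \<le> x" "x < p" "0 \<le> y" "y < p"
  shows "x = y"
proof (rule ccontr)
  assume "x \<noteq> y"
  have "p dvd \<bar>x - y\<bar>" using assms(1) by simp
  moreover have "0 < \<bar>x - y\<bar>" using \<open>x \<noteq> y\<close> by simp
  ultimately have "\<bar>x - y\<bar> \<ge> p" using zdvd_imp_le by blast
  then show False using assms by linarith
qed

lemma coeff_eq:
  fixes p q r a a' u v :: int
  assumes "coprime p q" "coprime p r" "p dvd (a - a')*q*r + p*u"
    "0 \<le> a" "a < p" "0 \<le> a'" "a' < p"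
  shows "a = a'"
proof -
  have "p dvd (a - a')*(q*r)" using assms(3)
    by (metis dvd_add_times_triv_right_iff mult.assoc mult.commute)
  moreover have "coprime p (q*r)" using assms by simp
  ultimately have "p dvd a - a'" using coprime_dvd_mult_left_iff by blast
  then show ?thesis using small0 assms by blast
qed

lemma good_unique:
  fixes p q r k :: int
  assumes "coprime p q" "coprime p r" "coprime q r"
    and "good p q r k (a,b,c)" "good p q r k (a',b',c')"
  shows "a = a' \<and> b = b' \<and> c = c'"
proof -
  have c: "[a*q*r + b*r*p + c*p*q = a'*q*r + b'*r*p + c'*p*q] (mod p*q*r)"
    using assms(4,5) unfolding good_def by (auto intro: cong_trans cong_sym)
  then have d: "p*q*r dvd (a - a')*q*r + (b-b')*r*p + (c-c')*p*q"
    by (simp add: cong_iff_dvd_diff algebra_simps)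
  define S where "S = (a - a')*q*r + (b-b')*r*p + (c-c')*p*q"
  have dp: "p dvd S" "q dvd S" "r dvd S" using d unfolding S_def
    by (meson dvd_mult_left dvd_mult_right dvd_trans)+
  have "S = (a - a')*q*r + p*((b-b')*r + (c-c')*q)" unfolding S_def by (simp add: algebra_simps)
  then have 1: "a = a'" using dp(1) coeff_eq[of p q r a a'] assms unfolding good_def by auto
  have "S = (b - b')*r*p + q*((a-a')*r + (c-c')*p)" unfolding S_def by (simp add: algebra_simps)
  then have 2: "b = b'" using dp(2) coeff_eq[of q r p b b'] assms unfolding good_def
    by (auto simp: coprime_commute)
  have "S = (c - c')*p*q + r*((a-a')*q + (b-b')*p)" unfolding S_def by (simp add: algebra_simps)
  then have 3: "c = c'" using dp(3) coeff_eq[of r p q c c'] assms unfolding good_def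
    by (auto simp: coprime_commute)
  show ?thesis using 1 2 3 by simp
qed

lemma part:
  fixes p q r s k b c :: int
  assumes "p dvd q*r*s - 1"
  shows "p dvd ((k*s) mod p)*q*r + b*r*p + c*p*q - k"
proof -
  have e: "(k*s) mod p = k*s - (k*s div p)*p" by (simp add: minus_div_mult_eq_mod)
  have "((k*s) mod p)*q*r + b*r*p + c*p*q - k = k*(q*r*s - 1) + p*(b*r + c*q - (k*s div p)*q*r)"
    unfolding e by (simp add: algebra_simps)
  moreover have "p dvd k*(q*r*s - 1) + p*(b*r + c*q - (k*s div p)*q*r)"
    using assms by (intro dvd_add dvd_mult dvd_triv_left)
  ultimately show ?thesis by simp
qed

lemma good_exists:
  fixes p q r k :: int
  assumes "coprime p q" "coprime p r" "coprime q r" "0 < p" "0 < q" "0 < r"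
  shows "\<exists>t. good p q r k t"
proof -
  have cp: "coprime q p" "coprime r p" "coprime r q" using assms(1-3) coprime_commute by blast+
  have c3: "coprime (q*r) p" "coprime (r*p) q" "coprime (p*q) r"
    using assms(1-3) cp by (simp_all only: coprime_mult_left_iff)
  obtain s where s1: "[q*r*s = 1] (mod p)" using cong_solve_coprime_int[OF c3(1)] by blast
  obtain t where t1: "[r*p*t = 1] (mod q)" using cong_solve_coprime_int[OF c3(2)] by blast
  obtain u where u1: "[p*q*u = 1] (mod r)" using cong_solve_coprime_int[OF c3(3)] by blast
  note st = s1 t1 u1
  define a where "a = (k*s) mod p"
  define b where "b = (k*t) mod q"
  define c where "c = (k*u) mod r"
  have i1: "p dvd q*r*s - 1" "q dvd r*p*t - 1" "r dvd p*q*u - 1"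
    using st by (simp_all only: cong_iff_dvd_diff)
  have d1: "p dvd a*q*r + b*r*p + c*p*q - k" unfolding a_def
    using part[OF i1(1)] by blast
  have "q dvd b*r*p + c*p*q + a*q*r - k" unfolding b_def
    using part[OF i1(2)] by blast
  moreover have "b*r*p + c*p*q + a*q*r - k = a*q*r + b*r*p + c*p*q - k" by (simp add: algebra_simps)
  ultimately have d2: "q dvd a*q*r + b*r*p + c*p*q - k" by simp
  have "r dvd c*p*q + a*q*r + b*r*p - k" unfolding c_def
    using part[OF i1(3)] by blast
  moreover have "c*p*q + a*q*r + b*r*p - k = a*q*r + b*r*p + c*p*q - k" by (simp add: algebra_simps)
  ultimately have d3: "r dvd a*q*r + b*r*p + c*p*q - k" by simp
  have "p*q*r dvd a*q*r + b*r*p + c*p*q - k" using dvd3[OF assms(1-3) d1 d2 d3] .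
  then have "[k = a*q*r + b*r*p + c*p*q] (mod p*q*r)"
    by (subst cong_iff_dvd_diff, subst dvd_diff_commute)
  moreover have "0 \<le> a" "a < p" "0 \<le> b" "b < q" "0 \<le> c" "c < r"
    using assms unfolding a_def b_def c_def by simp_all
  ultimately have "good p q r k (a,b,c)" unfolding good_def by simp
  then show ?thesis by blast
qed


lemma abc_eq:
  fixes p q r k :: int
  assumes "coprime p q" "coprime p r" "coprime q r" "good p q r k t"
  shows "abc p q r k = t"
proof -
  have e: "abc p q r k = (THE t. good p q r k t)"
    unfolding abc_def good_def by simp
  show ?thesis unfolding e
  proof (rule the_equality)
    show "good p q r k t" by fact
  next
    fix t' assume "good p q r k t'"
    then show "t' = t" using good_unique[OF assms(1-3)] assms(4)
      by (cases t'; cases t) auto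
  qed
qed

lemma abc_good:
  fixes p q r k :: int
  assumes "coprime p q" "coprime p r" "coprime q r" "0 < p" "0 < q" "0 < r"
  shows "good p q r k (abc p q r k)"
proof -
  obtain t where "good p q r k t" using good_exists[OF assms] by blast
  then show ?thesis using abc_eq[OF assms(1-3)] by simp
qed

lemma key:
  fixes p r r' pr' :: int
  assumes "coprime p r" "0 < p" "0 < r" "1 \<le> r'" "r' \<le> p - 1" "[r * r' = 1] (mod p)"
    "1 \<le> pr'" "pr' \<le> r - 1" "[p * pr' = 1] (mod r)"
  shows "r*r' + p*pr' - 1 = p*r"
proof -
  define X where "X = r*r' + p*pr' - 1"
  have "p dvd r*r' - 1" "r dvd p*pr' - 1" using assms(6,9) by (simp_all add: cong_iff_dvd_diff)
  then have "p dvd (r*r' - 1) + p*pr'" "r dvd (p*pr' - 1) + r*r'" by simp_all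
  then have "p dvd X" "r dvd X" unfolding X_def by (simp_all add: algebra_simps)
  then have "p*r dvd X" using divides_mult assms(1) by blast
  then obtain m where m: "X = p*r*m" by blast
  have "r*r' \<ge> r" "p*pr' \<ge> p" using assms by simp_all
  then have "X > 0" unfolding X_def using assms by linarith
  have "r*r' \<le> r*(p-1)" "p*pr' \<le> p*(r-1)" using assms by simp_all
  then have "r*r' \<le> p*r - r" "p*pr' \<le> p*r - p" by (simp_all add: algebra_simps)
  then have "X < 2*(p*r)" unfolding X_def using assms by linarith
  have pr: "p*r > 0" using assms by simp
  have "m > 0" using \<open>X > 0\<close> m pr by (simp add: zero_less_mult_iff)
  moreover have "m < 2" using \<open>X < 2*(p*r)\<close> m pr
    by (metis mult.commute mult_less_cancel_left_pos)
  ultimately have "m = 1" by simp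
  then show ?thesis using m X_def by simp
qed


lemma step_q:
  fixes p q r r' pr' k :: int
  assumes cop: "coprime p q" "coprime p r" "coprime q r" and pos: "0 < p" "0 < q" "0 < r"
    and h: "1 \<le> r'" "r' \<le> p - 1" "[r * r' = 1] (mod p)"
    "1 \<le> pr'" "pr' \<le> r - 1" "[p * pr' = 1] (mod r)"
  shows "F p q r k - F p q r (k - q) =
           (if ak p q r k < r' \<and> ck p q r k < pr' then -1
            else if ak p q r k \<ge> r' \<and> ck p q r k \<ge> pr' then 1 else 0)"
proof -
  obtain a b c where abc: "abc p q r k = (a,b,c)" by (cases "abc p q r k") auto
  have g: "good p q r k (a,b,c)" using abc_good[OF cop pos, of k] abc by simp
  then have bd: "0 \<le> a" "a < p" "0 \<le> b" "b < q" "0 \<le> c" "c < r"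
    and cg: "[k = a*q*r + b*r*p + c*p*q] (mod p*q*r)" unfolding good_def by simp_all
  define ea :: int where "ea = (if a \<ge> r' then 0 else 1)"
  define ec :: int where "ec = (if c \<ge> pr' then 0 else 1)"
  define a' where "a' = a - r' + p*ea"
  define c' where "c' = c - pr' + r*ec"
  have kk: "r*r' + p*pr' - 1 = p*r" using key[OF cop(2) pos(1,3) h] .
  have bd': "0 \<le> a'" "a' < p" "0 \<le> c'" "c' < r"
    unfolding a'_def c'_def ea_def ec_def using bd h by auto
  have D0: "p*q*r dvd k - (a*q*r + b*r*p + c*p*q)" using cg by (simp add: cong_iff_dvd_diff)
  have "(k - q) - (a'*q*r + b*r*p + c'*p*q)
     = (k - (a*q*r + b*r*p + c*p*q)) + q*(r*r' + p*pr' - 1) - p*q*r*(ea+ec)"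
    unfolding a'_def c'_def by (simp add: algebra_simps)
  also have "\<dots> = (k - (a*q*r + b*r*p + c*p*q)) + p*q*r*(1 - ea - ec)"
    unfolding kk by (simp add: algebra_simps)
  finally have E: "(k - q) - (a'*q*r + b*r*p + c'*p*q) = (k - (a*q*r + b*r*p + c*p*q)) + p*q*r*(1 - ea - ec)" .
  have "p*q*r dvd (k - q) - (a'*q*r + b*r*p + c'*p*q)" unfolding E
    by (rule dvd_add[OF D0 dvd_triv_left])
  then have "[k - q = a'*q*r + b*r*p + c'*p*q] (mod p*q*r)" by (simp add: cong_iff_dvd_diff)
  then have "good p q r (k - q) (a',b,c')" unfolding good_def using bd bd' by simp
  then have abc2: "abc p q r (k - q) = (a',b,c')" using abc_eq[OF cop] by blast
  have A: "ak p q r k = a" "ck p q r k = c" using abc unfolding ak_def ck_def by simp_all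
  have kr: "real_of_int r * real_of_int r' + real_of_int p * real_of_int pr' - 1
      = real_of_int p * real_of_int r"
    using arg_cong[OF kk, of real_of_int] by simp
  have pr0: "real_of_int p > 0" "real_of_int q > 0" "real_of_int r > 0" using pos by simp_all
  have "F p q r k - F p q r (k - q) = real_of_int (a - a') / p + real_of_int (c - c') / r
        - real_of_int q / real_of_int (p*q*r)"
    unfolding F_def ak_def bk_def ck_def abc abc2 using pr0
    by (simp add: field_simps)
  also have "\<dots> = (real_of_int r * real_of_int r' + real_of_int p * real_of_int pr' - 1)
        / (real_of_int p * real_of_int r) - ea - ec"
    unfolding a'_def c'_def using pr0 by (simp add: field_simps)
  also have "\<dots> = 1 - ea - ec" unfolding kr using pr0 by simp
  finally show ?thesis unfolding A ea_def ec_def by auto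
qed

lemma swap:
  fixes p q r k :: int
  assumes cop: "coprime p q" "coprime p r" "coprime q r" and pos: "0 < p" "0 < q" "0 < r"
  shows "ak p r q k = ak p q r k" "bk p r q k = ck p q r k" "ck p r q k = bk p q r k"
    "F p r q k = F p q r k"
proof -
  obtain a b c where abc: "abc p q r k = (a,b,c)" by (cases "abc p q r k") auto
  have g: "good p q r k (a,b,c)" using abc_good[OF cop pos, of k] abc by simp
  have e1: "a*r*q + c*q*p + b*p*r = a*q*r + b*r*p + c*p*q" "p*r*q = p*q*r" by (simp_all add: ac_simps)
  have "good p r q k (a,c,b)" using g unfolding good_def by (simp add: e1)
  moreover have "coprime r q" using cop(3) by (simp add: coprime_commute)
  ultimately have abc2: "abc p r q k = (a,c,b)" using abc_eq[OF cop(2) cop(1)] by blast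
  show "ak p r q k = ak p q r k" "bk p r q k = ck p q r k" "ck p r q k = bk p q r k"
    unfolding ak_def bk_def ck_def abc abc2 by simp_all
  show "F p r q k = F p q r k" unfolding F_def ak_def bk_def ck_def abc abc2 e1(2) by simp
qed


theorem lemma2:
  fixes p q r q' r' pq' pr' k :: int
  assumes "prime p" "prime q" "prime r"
    and "p \<noteq> q" "p \<noteq> r" "q \<noteq> r"
    and "p < q" "p < r"
    and "q' \<in> {1..p-1}" "[q * q' = 1] (mod p)"
    and "r' \<in> {1..p-1}" "[r * r' = 1] (mod p)"
    and "pq' \<in> {1..q-1}" "[p * pq' = 1] (mod q)"
    and "pr' \<in> {1..r-1}" "[p * pr' = 1] (mod r)"
  shows "(F p q r k - F p q r (k - q) =
           (if ak p q r k < r' \<and> ck p q r k < pr' then -1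
            else if ak p q r k \<ge> r' \<and> ck p q r k \<ge> pr' then 1 else 0)) \<and>
         (F p q r k - F p q r (k - r) =
           (if ak p q r k < q' \<and> bk p q r k < pq' then -1
            else if ak p q r k \<ge> q' \<and> bk p q r k \<ge> pq' then 1 else 0))"
proof -
  have cop: "coprime p q" "coprime p r" "coprime q r"
    using primes_coprime[OF assms(1,2,4)] primes_coprime[OF assms(1,3,5)]
      primes_coprime[OF assms(2,3,6)] by simp_all
  have cop': "coprime r q" using cop(3) by (simp add: coprime_commute)
  have pos: "0 < p" "0 < q" "0 < r" using prime_gt_0_int[OF assms(1)] prime_gt_0_int[OF assms(2)] prime_gt_0_int[OF assms(3)]
    by simp_all
  have 1: "F p q r k - F p q r (k - q) =
           (if ak p q r k < r' \<and> ck p q r k < pr' then -1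
            else if ak p q r k \<ge> r' \<and> ck p q r k \<ge> pr' then 1 else 0)"
    using step_q[OF cop pos, of r' pr' k] assms(11,12,15,16) by simp
  have 2: "F p r q k - F p r q (k - r) =
           (if ak p r q k < q' \<and> ck p r q k < pq' then -1
            else if ak p r q k \<ge> q' \<and> ck p r q k \<ge> pq' then 1 else 0)"
    using step_q[OF cop(2) cop(1) cop' pos(1,3,2), of q' pq' k] assms(9,10,13,14) by simp
  show ?thesis using 1 2 unfolding swap[OF cop pos] by simp
qed

end
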